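(* Let $L$ be a number field, $\Gamma$ an order of $L$, $K\subseteq L$ a subfield with ring of integers $\mathcal O_K$ and $n=[L:K]$, and $R=\mathrm M_n(\mathcal O_K)$. For each ring morphism $\rho:\Gamma\to R$ there exists a unique ring morphism $\varphi:K\to L$ such that $\rho$ is $\varphi$-compatible. In particular $\operatorname{Hom}(\Gamma,R)/R^\times=\bigsqcup_\varphi\bigl(\operatorname{Hom}_\varphi(\Gamma,R)/R^\times\bigr)$, the disjoint union over all ring morphisms $\varphi:K\to L$.
   Context: For a ring morphism $\varphi:K\to L$, regard $L$ as a $K$-algebra via $\varphi$ and $\mathrm M_n(K)$ as a $K$-algebra via scalar matrices. A ring morphism $\rho:\Gamma\to R$ is $\varphi$-compatible if $\rho\otimes\mathbb Q:L=\Gamma\otimes_{\mathbb Z}\mathbb Q\to R\otimes_{\mathbb Z}\mathbb Q=\mathrm M_n(K)$ is a morphism of $K$-algebras. $\operatorname{Hom}_\varphi(\Gamma,R)$ is the set of $\varphi$-compatible ring morphisms, stable under conjugation by $R^\times$. *)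

theory Defs
  imports Complex_Main "HOL-Computational_Algebra.Polynomial" "Jordan_Normal_Form.Matrix"
begin

text \<open>All number fields are realised as subfields of the complex numbers.\<close>

definition subfield_c :: "complex set \<Rightarrow> bool" where
  "subfield_c F \<longleftrightarrow> 0 \<in> F \<and> 1 \<in> F \<and> (\<forall>x\<in>F. \<forall>y\<in>F. x + y \<in> F \<and> x * y \<in> F)
     \<and> (\<forall>x\<in>F. - x \<in> F) \<and> (\<forall>x\<in>F. x \<noteq> 0 \<longrightarrow> inverse x \<in> F)"

definition lin_comb_over :: "complex set \<Rightarrow> complex set \<Rightarrow> complex set" where
  "lin_comb_over F B = {\<Sum>b\<in>B. c b * b | c. \<forall>b\<in>B. c b \<in> F}"

definition lin_indep_over :: "complex set \<Rightarrow> complex set \<Rightarrow> bool" where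
  "lin_indep_over F B \<longleftrightarrow> (\<forall>c. (\<forall>b\<in>B. c b \<in> F) \<and> (\<Sum>b\<in>B. c b * b) = 0 \<longrightarrow> (\<forall>b\<in>B. c b = 0))"

definition basis_over :: "complex set \<Rightarrow> complex set \<Rightarrow> complex set \<Rightarrow> bool" where
  "basis_over F B V \<longleftrightarrow> finite B \<and> B \<subseteq> V \<and> lin_indep_over F B \<and> lin_comb_over F B = V"

definition field_degree :: "complex set \<Rightarrow> complex set \<Rightarrow> nat" where
  "field_degree F V = card (SOME B. basis_over F B V)"

definition number_field :: "complex set \<Rightarrow> bool" where
  "number_field L \<longleftrightarrow> subfield_c L \<and> (\<exists>B. basis_over \<rat> B L)"

definition order_of :: "complex set \<Rightarrow> complex set \<Rightarrow> bool" where
  "order_of L \<Gamma> \<longleftrightarrow> \<Gamma> \<subseteq> L \<and> 1 \<in> \<Gamma> \<and> (\<forall>x\<in>\<Gamma>. \<forall>y\<in>\<Gamma>. x + y \<in> \<Gamma> \<and> x * y \<in> \<Gamma> \<and> - x \<in> \<Gamma>)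
     \<and> (\<exists>B. finite B \<and> \<Gamma> = {\<Sum>b\<in>B. of_int (c b) * b | c. True})
     \<and> L = {\<Sum>b\<in>S. c b * b | S c. finite S \<and> S \<subseteq> \<Gamma> \<and> (\<forall>b\<in>S. c b \<in> \<rat>)}"

definition algebraic_integer :: "complex \<Rightarrow> bool" where
  "algebraic_integer x \<longleftrightarrow> (\<exists>p :: int poly. lead_coeff p = 1 \<and> poly (map_poly of_int p) x = 0)"

definition ring_of_integers :: "complex set \<Rightarrow> complex set" where
  "ring_of_integers K = {x \<in> K. algebraic_integer x}"

definition field_ring_hom :: "complex set \<Rightarrow> complex set \<Rightarrow> (complex \<Rightarrow> complex) \<Rightarrow> bool" where
  "field_ring_hom K L \<phi> \<longleftrightarrow> \<phi> ` K \<subseteq> L \<and> \<phi> 1 = 1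
     \<and> (\<forall>x\<in>K. \<forall>y\<in>K. \<phi> (x + y) = \<phi> x + \<phi> y \<and> \<phi> (x * y) = \<phi> x * \<phi> y)"

definition mat_over :: "nat \<Rightarrow> complex set \<Rightarrow> complex mat set" where
  "mat_over n A = {M \<in> carrier_mat n n. \<forall>i<n. \<forall>j<n. M $$ (i, j) \<in> A}"

definition mat_ring_hom :: "complex set \<Rightarrow> nat \<Rightarrow> complex set \<Rightarrow> (complex \<Rightarrow> complex mat) \<Rightarrow> bool" where
  "mat_ring_hom \<Gamma> n A \<rho> \<longleftrightarrow> (\<forall>x\<in>\<Gamma>. \<rho> x \<in> mat_over n A) \<and> \<rho> 1 = 1\<^sub>m n
     \<and> (\<forall>x\<in>\<Gamma>. \<forall>y\<in>\<Gamma>. \<rho> (x + y) = \<rho> x + \<rho> y \<and> \<rho> (x * y) = \<rho> x * \<rho> y)"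

text \<open>The extension rho \<otimes> Q : L = Gamma \<otimes> Q \<rightarrow> M_n(O_K) \<otimes> Q = M_n(K):
  every element of L is gamma \<otimes> 1/m, sent to rho(gamma)/m.\<close>
definition tensor_Q :: "complex set \<Rightarrow> (complex \<Rightarrow> complex mat) \<Rightarrow> complex \<Rightarrow> complex mat" where
  "tensor_Q \<Gamma> \<rho> x = (THE M. \<exists>m::int. m > 0 \<and> of_int m * x \<in> \<Gamma>
        \<and> M = (1 / of_int m) \<cdot>\<^sub>m \<rho> (of_int m * x))"

text \<open>phi-compatibility: rho \<otimes> Q is a morphism of K-algebras, L a K-algebra via phi,
  M_n(K) a K-algebra via scalar matrices.\<close>
definition compatible :: "complex set \<Rightarrow> complex set \<Rightarrow> nat \<Rightarrow> complex set
     \<Rightarrow> (complex \<Rightarrow> complex) \<Rightarrow> (complex \<Rightarrow> complex mat) \<Rightarrow> bool" where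
  "compatible K L n \<Gamma> \<phi> \<rho> \<longleftrightarrow>
     (let f = tensor_Q \<Gamma> \<rho> in
       (\<forall>x\<in>L. f x \<in> mat_over n K) \<and> f 1 = 1\<^sub>m n
       \<and> (\<forall>x\<in>L. \<forall>y\<in>L. f (x + y) = f x + f y \<and> f (x * y) = f x * f y)
       \<and> (\<forall>k\<in>K. \<forall>x\<in>L. f (\<phi> k * x) = k \<cdot>\<^sub>m f x))"

end

theory Submission
  imports Defs
begin


lemma sf_int: assumes "subfield_c F" shows "of_int k \<in> F"
proof -
  have a: "0 \<in> F" "1 \<in> F" "\<And>x y. x \<in> F \<Longrightarrow> y \<in> F \<Longrightarrow> x + y \<in> F" "\<And>x. x \<in> F \<Longrightarrow> - x \<in> F"
    using assms unfolding subfield_c_def by auto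
  have n: "of_nat m \<in> F" for m by (induction m) (auto intro: a)
  show ?thesis
  proof (cases "k \<ge> 0")
    case True then show ?thesis using n[of "nat k"] by simp
  next
    case False then have "of_int k = - (of_nat (nat (-k)) :: complex)" by simp
    then show ?thesis using n a by metis
  qed
qed

lemma sf_Rats: assumes "subfield_c F" "x \<in> \<rat>" shows "x \<in> F"
proof -
  obtain r where r: "x = of_rat r" using assms(2) Rats_cases by blast
  obtain a b where ab: "r = Fract a b" "b > 0" by (cases r) auto
  have "x = of_int a * inverse (of_int b)" using r ab by (simp add: of_rat_rat divide_inverse)
  moreover have "of_int a \<in> F" "of_int b \<in> F" using sf_int assms by auto
  moreover have "(of_int b :: complex) \<noteq> 0" using ab by simp
  ultimately show ?thesis using assms(1) unfolding subfield_c_def by metis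
qed

lemma sf_sum: assumes "subfield_c F" "finite S" "\<And>b. b \<in> S \<Longrightarrow> g b \<in> F" shows "sum g S \<in> F"
  using assms(2,3)
proof (induction S rule: finite_induct)
  case empty then show ?case using assms(1) unfolding subfield_c_def by simp
next
  case (insert x S) then show ?case using assms(1) unfolding subfield_c_def by simp
qed

lemma sf_add: "subfield_c F \<Longrightarrow> x \<in> F \<Longrightarrow> y \<in> F \<Longrightarrow> x + y \<in> F"
  and sf_mult: "subfield_c F \<Longrightarrow> x \<in> F \<Longrightarrow> y \<in> F \<Longrightarrow> x * y \<in> F"
  and sf_uminus: "subfield_c F \<Longrightarrow> x \<in> F \<Longrightarrow> - x \<in> F"
  and sf_inverse: "subfield_c F \<Longrightarrow> x \<in> F \<Longrightarrow> inverse x \<in> F"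
  and sf_0: "subfield_c F \<Longrightarrow> 0 \<in> F"
  and sf_1: "subfield_c F \<Longrightarrow> 1 \<in> F"
  unfolding subfield_c_def by (auto simp del: inverse_eq_divide)

lemma sf_diff: "subfield_c F \<Longrightarrow> x \<in> F \<Longrightarrow> y \<in> F \<Longrightarrow> x - y \<in> F"
  using sf_add sf_uminus by (metis diff_conv_add_uminus)

lemma sf_divide: "subfield_c F \<Longrightarrow> x \<in> F \<Longrightarrow> y \<in> F \<Longrightarrow> x / y \<in> F"
  using sf_mult sf_inverse by (metis divide_inverse)

lemma Q_inj_surj:
  fixes B L :: "complex set" and p :: "complex \<Rightarrow> complex"
  assumes L: "subfield_c L" and B: "basis_over \<rat> B L"
    and pL: "\<And>x. x \<in> L \<Longrightarrow> p x \<in> L"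
    and padd: "\<And>x y. x \<in> L \<Longrightarrow> y \<in> L \<Longrightarrow> p (x + y) = p x + p y"
    and psc: "\<And>r x. r \<in> \<rat> \<Longrightarrow> x \<in> L \<Longrightarrow> p (r * x) = r * p x"
    and pinj: "inj_on p L"
    and y: "y \<in> L"
  shows "\<exists>x\<in>L. p x = y"
proof -
  interpret V: vector_space "\<lambda>(q::rat) (z::complex). of_rat q * z"
    by unfold_locales (auto simp: algebra_simps of_rat_add of_rat_mult)
  have fB: "finite B" and BL: "B \<subseteq> L" and indB: "lin_indep_over \<rat> B" and spB: "lin_comb_over \<rat> B = L"
    using B unfolding basis_over_def by auto
  have p0: "p 0 = 0" using padd[of 0 0] sf_0[OF L] by simp
  have psum: "p (\<Sum>b\<in>S. r b * b) = (\<Sum>b\<in>S. r b * p b)" if "finite S" "S \<subseteq> L" "\<And>b. b \<in> S \<Longrightarrow> r b \<in> \<rat>" for S r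
    using that
  proof (induction S rule: finite_induct)
    case empty then show ?case using p0 by simp
  next
    case (insert a S)
    have "(\<Sum>b\<in>S. r b * b) \<in> L" using insert by (intro sf_sum[OF L]) (auto intro: sf_mult[OF L] sf_Rats[OF L])
    moreover have "r a * a \<in> L" using insert sf_mult[OF L] sf_Rats[OF L] by auto
    ultimately show ?case using insert padd psc by simp
  qed
  have injpB: "inj_on p B" using pinj BL inj_on_subset by blast
  have indp: "V.independent (p ` B)"
  proof (rule V.independent_if_scalars_zero)
    show "finite (p ` B)" using fB by simp
  next
    fix c v assume h: "(\<Sum>v\<in>p ` B. of_rat (c v) * v) = 0" and v': "v \<in> p ` B"
    then obtain w where v: "w \<in> B" "v = p w" by auto
    have "(\<Sum>b\<in>B. of_rat (c (p b)) * p b) = 0" using h sum.reindex[OF injpB, of "\<lambda>v. of_rat (c v) * v"] by simp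
    then have "p (\<Sum>b\<in>B. of_rat (c (p b)) * b) = p 0" using psum[OF fB BL, of "\<lambda>b. of_rat (c (p b))"] p0 by simp
    moreover have "(\<Sum>b\<in>B. of_rat (c (p b)) * b) \<in> L" using BL by (intro sf_sum[OF L fB]) (auto intro!: sf_mult[OF L] sf_Rats[OF L Rats_of_rat])
    ultimately have s0: "(\<Sum>b\<in>B. of_rat (c (p b)) * b) = 0" using inj_onD[OF pinj _ _ sf_0[OF L]] by blast
    have "\<forall>b\<in>B. (of_rat (c (p b)) :: complex) = 0"
      using indB[unfolded lin_indep_over_def, rule_format, of "\<lambda>b. of_rat (c (p b))"] s0 by simp
    then have "of_rat (c (p w)) = (0::complex)" using v by blast
    then show "c v = 0" using v by simp
  qed
  have LspB: "L \<subseteq> V.span B"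
  proof
    fix x assume "x \<in> L"
    then obtain c where c: "x = (\<Sum>b\<in>B. c b * b)" "\<forall>b\<in>B. c b \<in> \<rat>" using spB unfolding lin_comb_over_def by auto
    have "\<forall>b\<in>B. \<exists>r. c b = of_rat r" using c(2) Rats_cases by (metis)
    then obtain u where "\<forall>b\<in>B. c b = of_rat (u b)" by metis
    then have "c b = of_rat (u b)" if "b \<in> B" for b using that by blast
    then have "x = (\<Sum>b\<in>B. of_rat (u b) * b)" using c(1) by simp
    then show "x \<in> V.span B" unfolding V.span_finite[OF fB] by auto
  qed
  have "y \<in> V.span (p ` B)"
  proof (rule ccontr)
    assume "y \<notin> V.span (p ` B)"
    then have ind2: "V.independent (insert y (p ` B))" using V.independent_insertI indp by blast
    have "p ` B \<subseteq> L" using BL pL by auto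
    then have "insert y (p ` B) \<subseteq> V.span B" using LspB y by auto
    then have "card (insert y (p ` B)) \<le> card B" using V.independent_span_bound[OF fB ind2] by blast
    moreover have "y \<notin> p ` B" using \<open>y \<notin> V.span (p ` B)\<close> V.span_base by blast
    ultimately have "card (p ` B) + 1 \<le> card B" using fB by simp
    then show False using card_image[OF injpB] by simp
  qed
  then obtain u where u: "y = (\<Sum>v\<in>p ` B. of_rat (u v) * v)" using V.span_finite[of "p ` B"] fB by auto
  then have "y = (\<Sum>b\<in>B. of_rat (u (p b)) * p b)" using sum.reindex[OF injpB, of "\<lambda>v. of_rat (u v) * v"] by simp
  then have e: "y = p (\<Sum>b\<in>B. of_rat (u (p b)) * b)" using psum[OF fB BL, of "\<lambda>b. of_rat (u (p b))"] by simp
  have "(\<Sum>b\<in>B. of_rat (u (p b)) * b) \<in> L" using BL by (intro sf_sum[OF L fB]) (auto intro!: sf_mult[OF L] sf_Rats[OF L Rats_of_rat])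
  then show ?thesis using e by blast
qed

lemma Q_bound:
  fixes B L T :: "complex set"
  assumes L: "subfield_c L" and B: "basis_over \<rat> B L"
    and T: "finite T" "T \<subseteq> L" and indT: "\<And>f. (\<Sum>t\<in>T. of_rat (f t) * t) = 0 \<Longrightarrow> \<forall>t\<in>T. f t = 0"
  shows "card T \<le> card B"
proof -
  interpret V: vector_space "\<lambda>(q::rat) (z::complex). of_rat q * z"
    by unfold_locales (auto simp: algebra_simps of_rat_add of_rat_mult)
  have fB: "finite B" and spB: "lin_comb_over \<rat> B = L"
    using B unfolding basis_over_def by auto
  have LspB: "L \<subseteq> V.span B"
  proof
    fix x assume "x \<in> L"
    then obtain c where c: "x = (\<Sum>b\<in>B. c b * b)" "\<forall>b\<in>B. c b \<in> \<rat>" using spB unfolding lin_comb_over_def by auto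
    have "\<forall>b\<in>B. \<exists>r. c b = of_rat r" using c(2) unfolding Rats_def by blast
    then obtain u where "\<forall>b\<in>B. c b = of_rat (u b)" by metis
    then have "x = (\<Sum>b\<in>B. of_rat (u b) * b)" using c(1) by simp
    then show "x \<in> V.span B" unfolding V.span_finite[OF fB] by auto
  qed
  have "V.independent T"
    by (rule V.independent_if_scalars_zero[OF T(1)]) (use indT in blast)
  then show ?thesis using V.independent_span_bound[OF fB _ ] LspB T(2) by blast
qed

lemma sf_Q_sub: "subfield_c K \<Longrightarrow> (of_rat r :: complex) \<in> K"
  by (rule sf_Rats) simp_all

lemma lin_comb_I: "(\<forall>b\<in>B. c b \<in> F) \<Longrightarrow> x = (\<Sum>b\<in>B. c b * b) \<Longrightarrow> x \<in> lin_comb_over F B"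
  unfolding lin_comb_over_def by auto

lemma K_basis_exists:
  assumes L: "subfield_c L" and BQ: "basis_over \<rat> BQ L" and K: "subfield_c K" and KL: "K \<subseteq> L"
  shows "\<exists>B. basis_over K B L"
proof -
  let ?I = "\<lambda>B. finite B \<and> B \<subseteq> L \<and> lin_indep_over K B"
  have bound: "card B \<le> card BQ" if "?I B" for B
  proof (rule Q_bound[OF L BQ])
    show "finite B" "B \<subseteq> L" using that by auto
    fix f assume "(\<Sum>t\<in>B. of_rat (f t) * t) = 0"
    then have "\<forall>t\<in>B. (of_rat (f t) :: complex) = 0"
      using that[THEN conjunct2, THEN conjunct2, unfolded lin_indep_over_def, rule_format, of "\<lambda>t. of_rat (f t)"] sf_Q_sub[OF K] by simp
    then show "\<forall>t\<in>B. f t = 0" by simp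
  qed
  have "?I {}" unfolding lin_indep_over_def by simp
  define C where "C = card ` {B. ?I B}"
  have "C \<subseteq> {..card BQ}" unfolding C_def using bound by auto
  then have Cfin: "finite C" using finite_subset by blast
  have "0 \<in> C" unfolding C_def using \<open>?I {}\<close> by (intro image_eqI[of _ _ "{}"]) simp_all
  then have "Max C \<in> C" using Cfin by (intro Max_in) blast+
  then obtain B where IB0: "B \<in> {B. ?I B}" and cB0: "Max C = card B" unfolding C_def by (rule imageE)
  have IB: "?I B" using IB0 by simp
  have cB: "card B = Max C" using cB0 by simp
  have maxB: "card B' \<le> card B" if "?I B'" for B'
  proof -
    have "card B' \<in> C" unfolding C_def using that by (intro imageI) simp
    then show ?thesis using Cfin cB by simp
  qed
  have "lin_comb_over K B = L"
  proof
    show "lin_comb_over K B \<subseteq> L"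
    proof
      fix x assume "x \<in> lin_comb_over K B"
      then obtain c where c: "x = (\<Sum>b\<in>B. c b * b)" "\<forall>b\<in>B. c b \<in> K" unfolding lin_comb_over_def by auto
      show "x \<in> L" unfolding c(1) using IB c(2) KL by (intro sf_sum[OF L]) (auto intro!: sf_mult[OF L])
    qed
  next
    show "L \<subseteq> lin_comb_over K B"
    proof
      fix x assume x: "x \<in> L"
      show "x \<in> lin_comb_over K B"
      proof (cases "x \<in> B")
        case True
        have "(\<Sum>b\<in>B. (if b = x then 1 else 0) * b) = (\<Sum>b\<in>B. if b = x then x else 0)"
          by (rule sum.cong) auto
        also have "\<dots> = x" using True IB by simp
        finally have "x = (\<Sum>b\<in>B. (if b = x then 1 else 0) * b)" by simp
        moreover have "\<forall>b\<in>B. (if b = x then 1 else 0) \<in> K" using sf_0[OF K] sf_1[OF K] by auto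
        ultimately show ?thesis by (intro lin_comb_I) 
      next
        case False
        have "\<not> ?I (insert x B)"
        proof
          assume "?I (insert x B)"
          then have "card (insert x B) \<le> card B" by (rule maxB)
          then show False using False IB by simp
        qed
        then have "\<not> lin_indep_over K (insert x B)" using IB x by auto
        then obtain c where c: "\<forall>b\<in>insert x B. c b \<in> K" "(\<Sum>b\<in>insert x B. c b * b) = 0"
          and nz: "\<exists>b\<in>insert x B. c b \<noteq> 0" unfolding lin_indep_over_def not_all not_imp by blast
        have sum: "c x * x + (\<Sum>b\<in>B. c b * b) = 0" using c(2) False IB by simp
        have cx: "c x \<noteq> 0"
        proof
          assume "c x = 0"
          then have "(\<Sum>b\<in>B. c b * b) = 0" using sum by simp
          then have "\<forall>b\<in>B. c b = 0" using IB[THEN conjunct2, THEN conjunct2, unfolded lin_indep_over_def, rule_format, of c] c(1) by simp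
          then show False using nz \<open>c x = 0\<close> by blast
        qed
        have "x = (\<Sum>b\<in>B. (- c b / c x) * b)"
        proof -
          have "(\<Sum>b\<in>B. (- c b / c x) * b) = - (\<Sum>b\<in>B. c b * b) / c x"
            by (simp add: sum_divide_distrib sum_negf)
          also have "\<dots> = x"
          proof -
            have "(\<Sum>b\<in>B. c b * b) = - (c x * x)" using sum by (simp add: eq_neg_iff_add_eq_0 add.commute)
            then show ?thesis using cx by simp
          qed
          finally show ?thesis by simp
        qed
        moreover have "\<forall>b\<in>B. - c b / c x \<in> K" using c(1) by (auto intro!: sf_divide[OF K] sf_uminus[OF K])
        ultimately show ?thesis by (intro lin_comb_I)
      qed
    qed
  qed
  then show ?thesis using IB unfolding basis_over_def by blast
qed

context
  fixes L \<Gamma> :: "complex set" and n :: nat and \<rho> :: "complex \<Rightarrow> complex mat"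
  assumes ord: "order_of L \<Gamma>"
    and car: "\<And>x. x \<in> \<Gamma> \<Longrightarrow> \<rho> x \<in> carrier_mat n n"
    and radd: "\<And>x y. x \<in> \<Gamma> \<Longrightarrow> y \<in> \<Gamma> \<Longrightarrow> \<rho> (x + y) = \<rho> x + \<rho> y"
begin

lemma G1: "1 \<in> \<Gamma>" and Gadd: "\<And>x y. x \<in> \<Gamma> \<Longrightarrow> y \<in> \<Gamma> \<Longrightarrow> x + y \<in> \<Gamma>"
  and Gmult: "\<And>x y. x \<in> \<Gamma> \<Longrightarrow> y \<in> \<Gamma> \<Longrightarrow> x * y \<in> \<Gamma>"
  and Gneg: "\<And>x. x \<in> \<Gamma> \<Longrightarrow> - x \<in> \<Gamma>" and GL: "\<Gamma> \<subseteq> L"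
  using ord unfolding order_of_def by auto

lemma G0: "0 \<in> \<Gamma>" using Gadd[OF G1 Gneg[OF G1]] by simp

lemma Gint: assumes "y \<in> \<Gamma>" shows "of_int k * y \<in> \<Gamma>"
proof -
  have n: "of_nat m * y \<in> \<Gamma>" for m by (induction m) (auto simp: G0 distrib_right intro: Gadd assms)
  show ?thesis
  proof (cases "k \<ge> 0")
    case True then show ?thesis using n[of "nat k"] by simp
  next
    case False then have "of_int k * y = - (of_nat (nat (-k)) * y)" by simp
    then show ?thesis using n Gneg by metis
  qed
qed

lemma addfun_int:
  fixes e :: "complex \<Rightarrow> complex"
  assumes eadd: "\<And>x y. x \<in> \<Gamma> \<Longrightarrow> y \<in> \<Gamma> \<Longrightarrow> e (x + y) = e x + e y" and y: "y \<in> \<Gamma>"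
  shows "e (of_int k * y) = of_int k * e y"
proof -
  have e0: "e 0 = 0" using eadd[OF G0 G0] by simp
  have n: "e (of_nat m * y) = of_nat m * e y" for m
  proof (induction m)
    case 0 then show ?case using e0 by simp
  next
    case (Suc m)
    have my: "of_nat m * y \<in> \<Gamma>" using Gint[OF y, of "int m"] by simp
    have eq: "of_nat (Suc m) * y = of_nat m * y + y" by (simp add: algebra_simps)
    have "e (of_nat (Suc m) * y) = e (of_nat m * y) + e y" unfolding eq by (rule eadd[OF my y])
    then show ?case using Suc by (simp add: algebra_simps)
  qed
  have neg: "e (- z) = - e z" if "z \<in> \<Gamma>" for z
  proof -
    have "e z + e (- z) = 0" using eadd[OF that Gneg[OF that]] e0 by simp
    then show ?thesis by (simp add: eq_neg_iff_add_eq_0 add.commute)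
  qed
  show ?thesis
  proof (cases "k \<ge> 0")
    case True then show ?thesis using n[of "nat k"] by simp
  next
    case False
    have kk: "k = - int (nat (-k))" using False by simp
    have eq: "of_int k * y = - (of_nat (nat (-k)) * y)" by (subst kk) simp
    have my: "of_nat (nat (-k)) * y \<in> \<Gamma>" using Gint[OF y, of "int (nat (-k))"] unfolding of_int_of_nat_eq .
    have "e (of_int k * y) = - (of_nat (nat (-k)) * e y)" unfolding eq neg[OF my] n ..
    also have "\<dots> = of_int k * e y" by (subst (2) kk) simp
    finally show ?thesis .
  qed
qed

lemma rho_int: assumes y: "y \<in> \<Gamma>" shows "\<rho> (of_int k * y) = of_int k \<cdot>\<^sub>m \<rho> y"
proof (rule eq_matI)
  fix i j assume ij: "i < dim_row (of_int k \<cdot>\<^sub>m \<rho> y)" "j < dim_col (of_int k \<cdot>\<^sub>m \<rho> y)"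
  then have ij': "i < n" "j < n" using car[OF y] by auto
  have "(\<lambda>z. \<rho> z $$ (i, j)) (of_int k * y) = of_int k * (\<lambda>z. \<rho> z $$ (i, j)) y"
    apply (rule addfun_int[OF _ y])
    subgoal for a b using car[of a] car[of b] ij' by (simp add: radd)
    done
  then show "\<rho> (of_int k * y) $$ (i, j) = (of_int k \<cdot>\<^sub>m \<rho> y) $$ (i, j)" using ij' car[OF y] by simp
qed (use car[OF y] car[OF Gint[OF y, of k]] in auto)

lemma denom: assumes "x \<in> L" shows "\<exists>m::int. m > 0 \<and> of_int m * x \<in> \<Gamma>"
proof -
  obtain S c where S: "x = (\<Sum>b\<in>S. c b * b)" "finite S" "S \<subseteq> \<Gamma>" "\<forall>b\<in>S. c b \<in> \<rat>"
  proof -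
    have Leq: "L = {\<Sum>b\<in>S. c b * b | S c. finite S \<and> S \<subseteq> \<Gamma> \<and> (\<forall>b\<in>S. c b \<in> \<rat>)}"
      using ord[unfolded order_of_def, THEN conjunct2, THEN conjunct2, THEN conjunct2, THEN conjunct2] .
    have "x \<in> {\<Sum>b\<in>S. c b * b | S c. finite S \<and> S \<subseteq> \<Gamma> \<and> (\<forall>b\<in>S. c b \<in> \<rat>)}"
      using assms Leq by simp
    then show ?thesis using that by blast
  qed
  have "\<exists>m::int. m > 0 \<and> of_int m * (\<Sum>b\<in>S. c b * b) \<in> \<Gamma>" using S(2-4)
  proof (induction S rule: finite_induct)
    case empty then show ?case using G0 by (intro exI[of _ 1]) auto
  next
    case (insert a S)
    then obtain m where m: "m > 0" "of_int m * (\<Sum>b\<in>S. c b * b) \<in> \<Gamma>" by auto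
    have "c a \<in> \<rat>" using insert(5) by simp
    then obtain r where r: "c a = of_rat r" unfolding Rats_def by blast
    obtain p q where pq: "r = Fract p q" "q > 0" by (cases r) auto
    have ca: "c a = of_int p / of_int q" using r pq by (simp add: of_rat_rat)
    have qa: "of_int (m * q) * (c a * a) = of_int (m * p) * a" using pq(2) ca by simp
    have "of_int (m * q) * (\<Sum>b\<in>insert a S. c b * b)
          = of_int (m * q) * (c a * a) + of_int (m * q) * (\<Sum>b\<in>S. c b * b)"
      using insert(1,2) by (simp add: distrib_left)
    also have "\<dots> = of_int q * (of_int m * (\<Sum>b\<in>S. c b * b)) + of_int (m * p) * a"
      unfolding qa by (simp add: algebra_simps)
    finally have eq: "of_int (m * q) * (\<Sum>b\<in>insert a S. c b * b)
          = of_int q * (of_int m * (\<Sum>b\<in>S. c b * b)) + of_int (m * p) * a" .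
    have "of_int q * (of_int m * (\<Sum>b\<in>S. c b * b)) + of_int (m * p) * a \<in> \<Gamma>"
      using insert(4) by (intro Gadd Gint m(2)) auto
    then show ?case using m pq eq by (intro exI[of _ "m * q"]) simp
  qed
  then show ?thesis using S by simp
qed

lemma tensor_eq: assumes m: "m > 0" "of_int m * x \<in> \<Gamma>"
  shows "tensor_Q \<Gamma> \<rho> x = (1 / of_int m) \<cdot>\<^sub>m \<rho> (of_int m * x)"
  unfolding tensor_Q_def
proof (rule the_equality)
  show "\<exists>m'::int. m' > 0 \<and> of_int m' * x \<in> \<Gamma> \<and> (1 / of_int m) \<cdot>\<^sub>m \<rho> (of_int m * x) = (1 / of_int m') \<cdot>\<^sub>m \<rho> (of_int m' * x)"
    using m by blast
next
  fix M assume "\<exists>m'::int. m' > 0 \<and> of_int m' * x \<in> \<Gamma> \<and> M = (1 / of_int m') \<cdot>\<^sub>m \<rho> (of_int m' * x)"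
  then obtain m' :: int where m': "m' > 0" "of_int m' * x \<in> \<Gamma>" "M = (1 / of_int m') \<cdot>\<^sub>m \<rho> (of_int m' * x)" by blast
  have "\<rho> (of_int m' * (of_int m * x)) = \<rho> (of_int m * (of_int m' * x))" by (simp add: algebra_simps)
  then have eq: "of_int m' \<cdot>\<^sub>m \<rho> (of_int m * x) = of_int m \<cdot>\<^sub>m \<rho> (of_int m' * x)"
    using rho_int m m' by metis
  show "M = (1 / of_int m) \<cdot>\<^sub>m \<rho> (of_int m * x)"
  proof (rule eq_matI)
    fix i j assume "i < dim_row ((1 / of_int m) \<cdot>\<^sub>m \<rho> (of_int m * x))" "j < dim_col ((1 / of_int m) \<cdot>\<^sub>m \<rho> (of_int m * x))"
    then have ij: "i < n" "j < n" using car[OF m(2)] by auto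
    have "of_int m' * \<rho> (of_int m * x) $$ (i, j) = of_int m * \<rho> (of_int m' * x) $$ (i, j)"
      using arg_cong[OF eq, of "\<lambda>A. A $$ (i, j)"] ij car[OF m(2)] car[OF m'(2)] by simp
    then show "M $$ (i, j) = ((1 / of_int m) \<cdot>\<^sub>m \<rho> (of_int m * x)) $$ (i, j)"
      using ij car[OF m(2)] car[OF m'(2)] m'(3) m(1) m'(1) by (simp add: field_simps)
  qed (use m'(3) car[OF m(2)] car[OF m'(2)] in auto)
qed


lemma tQ_Gamma: "x \<in> \<Gamma> \<Longrightarrow> tensor_Q \<Gamma> \<rho> x = \<rho> x"
proof -
  assume x: "x \<in> \<Gamma>"
  have "1 \<cdot>\<^sub>m \<rho> x = \<rho> x" by (rule eq_matI) auto
  then show ?thesis using tensor_eq[of 1 x] x by simp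
qed

lemma tQ_car: assumes "x \<in> L" shows "tensor_Q \<Gamma> \<rho> x \<in> carrier_mat n n"
proof -
  obtain m where m: "m > 0" "of_int m * x \<in> \<Gamma>" using denom assms by blast
  then show ?thesis using tensor_eq[OF m] car[OF m(2)] by simp
qed

lemma tQ_add: assumes x: "x \<in> L" and y: "y \<in> L"
  shows "tensor_Q \<Gamma> \<rho> (x + y) = tensor_Q \<Gamma> \<rho> x + tensor_Q \<Gamma> \<rho> y"
proof -
  obtain m1 where m1: "m1 > 0" "of_int m1 * x \<in> \<Gamma>" using denom x by blast
  obtain m2 where m2: "m2 > 0" "of_int m2 * y \<in> \<Gamma>" using denom y by blast
  have e: "of_int (m1 * m2) * (x + y) = of_int m2 * (of_int m1 * x) + of_int m1 * (of_int m2 * y)"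
    by (simp add: algebra_simps)
  have m: "m1 * m2 > 0" "of_int (m1 * m2) * (x + y) \<in> \<Gamma>" using m1 m2 Gadd[OF Gint[OF m1(2)] Gint[OF m2(2)]] unfolding e by auto
  have r: "\<rho> (of_int (m1 * m2) * (x + y)) = of_int m2 \<cdot>\<^sub>m \<rho> (of_int m1 * x) + of_int m1 \<cdot>\<^sub>m \<rho> (of_int m2 * y)"
    unfolding e radd[OF Gint[OF m1(2)] Gint[OF m2(2)]] rho_int[OF m1(2)] rho_int[OF m2(2)] ..
  have c1: "\<rho> (of_int m1 * x) \<in> carrier_mat n n" and c2: "\<rho> (of_int m2 * y) \<in> carrier_mat n n"
    using car m1 m2 by auto
  show ?thesis
    unfolding tensor_eq[OF m] tensor_eq[OF m1] tensor_eq[OF m2] r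
  proof (rule eq_matI)
    fix i j assume ij: "i < dim_row ((1 / of_int m1) \<cdot>\<^sub>m \<rho> (of_int m1 * x) + (1 / of_int m2) \<cdot>\<^sub>m \<rho> (of_int m2 * y))"
       "j < dim_col ((1 / of_int m1) \<cdot>\<^sub>m \<rho> (of_int m1 * x) + (1 / of_int m2) \<cdot>\<^sub>m \<rho> (of_int m2 * y))"
    then have ij': "i < n" "j < n" using c2 by auto
    have nz: "(of_int m1 :: complex) \<noteq> 0" "(of_int m2 :: complex) \<noteq> 0" using m1 m2 by auto
    show "((1 / of_int (m1 * m2)) \<cdot>\<^sub>m (of_int m2 \<cdot>\<^sub>m \<rho> (of_int m1 * x) + of_int m1 \<cdot>\<^sub>m \<rho> (of_int m2 * y))) $$ (i, j) =
          ((1 / of_int m1) \<cdot>\<^sub>m \<rho> (of_int m1 * x) + (1 / of_int m2) \<cdot>\<^sub>m \<rho> (of_int m2 * y)) $$ (i, j)"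
      using ij' c1 c2 nz by (simp add: field_simps)
  qed (use c1 c2 in auto)
qed

lemma smult_smult_mat: "(a::complex) \<cdot>\<^sub>m (b \<cdot>\<^sub>m M) = (a * b) \<cdot>\<^sub>m M"
  by (rule eq_matI) auto

lemma tQ_mult: assumes rmul: "\<And>x y. x \<in> \<Gamma> \<Longrightarrow> y \<in> \<Gamma> \<Longrightarrow> \<rho> (x * y) = \<rho> x * \<rho> y"
  and x: "x \<in> L" and y: "y \<in> L"
  shows "tensor_Q \<Gamma> \<rho> (x * y) = tensor_Q \<Gamma> \<rho> x * tensor_Q \<Gamma> \<rho> y"
proof -
  obtain m1 where m1: "m1 > 0" "of_int m1 * x \<in> \<Gamma>" using denom x by blast
  obtain m2 where m2: "m2 > 0" "of_int m2 * y \<in> \<Gamma>" using denom y by blast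
  have e: "of_int (m1 * m2) * (x * y) = (of_int m1 * x) * (of_int m2 * y)"
    by (simp add: algebra_simps)
  have m: "m1 * m2 > 0" "of_int (m1 * m2) * (x * y) \<in> \<Gamma>" using m1 m2 Gmult[OF m1(2) m2(2)] unfolding e by auto
  have "tensor_Q \<Gamma> \<rho> x * tensor_Q \<Gamma> \<rho> y
     = ((1 / of_int m1) \<cdot>\<^sub>m \<rho> (of_int m1 * x)) * ((1 / of_int m2) \<cdot>\<^sub>m \<rho> (of_int m2 * y))"
    unfolding tensor_eq[OF m1] tensor_eq[OF m2] ..
  also have "\<dots> = (1 / of_int m1) \<cdot>\<^sub>m ((1 / of_int m2) \<cdot>\<^sub>m (\<rho> (of_int m1 * x) * \<rho> (of_int m2 * y)))"
    using mult_smult_assoc_mat[OF car[OF m1(2)] smult_carrier_mat[OF car[OF m2(2)]]]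
      mult_smult_distrib[OF car[OF m1(2)] car[OF m2(2)]] by simp
  also have "\<dots> = tensor_Q \<Gamma> \<rho> (x * y)"
    unfolding tensor_eq[OF m] e rmul[OF m1(2) m2(2)] smult_smult_mat by simp
  finally show ?thesis by simp
qed

end



lemma mat_col_unit:
  fixes A B :: "complex mat"
  assumes A: "A \<in> carrier_mat n n" and B: "B \<in> carrier_mat n n" and i: "i < n" and j: "j < n" and n0: "0 < n"
    and Bc: "\<And>k. k < n \<Longrightarrow> B $$ (k, 0) = (if k = j then c else 0)"
  shows "(A * B) $$ (i, 0) = A $$ (i, j) * c"
proof -
  have "(A * B) $$ (i, 0) = (\<Sum>k\<in>{0..<n}. A $$ (i, k) * B $$ (k, 0))"
    using A B i n0 by (simp add: scalar_prod_def)
  also have "\<dots> = (\<Sum>k\<in>{0..<n}. if k = j then A $$ (i, j) * c else 0)"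
    by (rule sum.cong) (auto simp: Bc)
  also have "\<dots> = A $$ (i, j) * c" using j by simp
  finally show ?thesis .
qed

lemma mat_over_mult:
  assumes K: "subfield_c K" and A: "A \<in> mat_over n K" and B: "B \<in> mat_over n K"
  shows "A * B \<in> mat_over n K"
proof -
  have Ac: "A \<in> carrier_mat n n" and Bc: "B \<in> carrier_mat n n" using A B unfolding mat_over_def by auto
  have "(A * B) $$ (i, j) \<in> K" if "i < n" "j < n" for i j
  proof -
    have "(A * B) $$ (i, j) = (\<Sum>k\<in>{0..<n}. A $$ (i, k) * B $$ (k, j))"
      using Ac Bc that by (simp add: scalar_prod_def)
    also have "\<dots> \<in> K" using A B that unfolding mat_over_def
      by (intro sf_sum[OF K]) (auto intro!: sf_mult[OF K])
    finally show ?thesis .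
  qed
  then show ?thesis using Ac Bc unfolding mat_over_def by auto
qed

lemma smult_smult_mat': "(a::complex) \<cdot>\<^sub>m (b \<cdot>\<^sub>m M) = (a * b) \<cdot>\<^sub>m M"
  by (rule eq_matI) auto

lemma smult_1_mat: "1 \<cdot>\<^sub>m A = (A::complex mat)"
  by (rule eq_matI) auto

lemma smult_one_mat_left: "A \<in> carrier_mat n n \<Longrightarrow> (k \<cdot>\<^sub>m 1\<^sub>m n) * A = (k::complex) \<cdot>\<^sub>m A"
  using mult_smult_assoc_mat[of "1\<^sub>m n" n n A n k] by simp

lemma main1:
  fixes L K \<Gamma> :: "complex set" and n :: nat and \<rho> :: "complex \<Rightarrow> complex mat"
  assumes NF: "number_field L" and ord: "order_of L \<Gamma>" and K: "subfield_c K" and KL: "K \<subseteq> L"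
    and nd: "n = field_degree K L" and rh: "mat_ring_hom \<Gamma> n (ring_of_integers K) \<rho>"
  shows "\<exists>\<phi>. field_ring_hom K L \<phi> \<and> compatible K L n \<Gamma> \<phi> \<rho>
           \<and> (\<forall>\<psi>. field_ring_hom K L \<psi> \<and> compatible K L n \<Gamma> \<psi> \<rho> \<longrightarrow> (\<forall>x\<in>K. \<psi> x = \<phi> x))"
proof -
  have L: "subfield_c L" using NF unfolding number_field_def by blast
  obtain BQ where BQ: "basis_over \<rat> BQ L" using NF unfolding number_field_def by blast
  have rO: "\<And>x. x \<in> \<Gamma> \<Longrightarrow> \<rho> x \<in> mat_over n (ring_of_integers K)" and r1: "\<rho> 1 = 1\<^sub>m n"
    and radd: "\<And>x y. x \<in> \<Gamma> \<Longrightarrow> y \<in> \<Gamma> \<Longrightarrow> \<rho> (x + y) = \<rho> x + \<rho> y"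
    and rmul: "\<And>x y. x \<in> \<Gamma> \<Longrightarrow> y \<in> \<Gamma> \<Longrightarrow> \<rho> (x * y) = \<rho> x * \<rho> y"
    using rh unfolding mat_ring_hom_def by auto
  have car: "\<And>x. x \<in> \<Gamma> \<Longrightarrow> \<rho> x \<in> carrier_mat n n" using rO unfolding mat_over_def by auto
  define f where "f = tensor_Q \<Gamma> \<rho>"
  have fcar: "\<And>x. x \<in> L \<Longrightarrow> f x \<in> carrier_mat n n" unfolding f_def by (rule tQ_car[OF ord car radd])
  have fadd: "\<And>x y. x \<in> L \<Longrightarrow> y \<in> L \<Longrightarrow> f (x + y) = f x + f y" unfolding f_def by (rule tQ_add[OF ord car radd])
  have fmul: "\<And>x y. x \<in> L \<Longrightarrow> y \<in> L \<Longrightarrow> f (x * y) = f x * f y" unfolding f_def by (rule tQ_mult[OF ord car radd rmul])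
  have G1: "1 \<in> \<Gamma>" by (rule G1[OF ord car radd])
  have f1: "f 1 = 1\<^sub>m n" unfolding f_def using tQ_Gamma[OF ord car radd G1] r1 by simp
  have fK: "f x \<in> mat_over n K" if x: "x \<in> L" for x
  proof -
    obtain m where m: "m > 0" "of_int m * x \<in> \<Gamma>" using denom[OF ord car radd x] by blast
    have fx: "f x = (1 / of_int m) \<cdot>\<^sub>m \<rho> (of_int m * x)" unfolding f_def by (rule tensor_eq[OF ord car radd m])
    have mK: "1 / of_int m \<in> K" by (rule sf_Rats[OF K]) simp
    show ?thesis using rO[OF m(2)] unfolding fx mat_over_def ring_of_integers_def
      by (auto intro!: sf_mult[OF K] sf_divide[OF K] mK sf_int[OF K])
  qed
  have fQ: "f (r * x) = r \<cdot>\<^sub>m f x" if r: "r \<in> \<rat>" and x: "x \<in> L" for r x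
  proof -
    obtain q where q: "r = of_rat q" using r unfolding Rats_def by blast
    obtain a b where ab: "q = Fract a b" "b > 0" by (cases q) auto
    have rab: "r = of_int a / of_int b" using q ab by (simp add: of_rat_rat)
    have rL: "r \<in> L" by (rule sf_Rats[OF L r])
    have br: "of_int b * r = of_int a * 1" using rab ab(2) by simp
    have aG: "of_int a * 1 \<in> \<Gamma>" by (rule Gint[OF ord car radd G1])
    have "f r = (1 / of_int b) \<cdot>\<^sub>m \<rho> (of_int b * r)" unfolding f_def
      by (rule tensor_eq[OF ord car radd]) (use ab(2) br aG in auto)
    also have "\<dots> = (1 / of_int b) \<cdot>\<^sub>m (of_int a \<cdot>\<^sub>m 1\<^sub>m n)" using rho_int[OF ord car radd G1, of a] r1 br by simp
    also have "\<dots> = r \<cdot>\<^sub>m 1\<^sub>m n" unfolding rab by (rule eq_matI) auto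
    finally have fr: "f r = r \<cdot>\<^sub>m 1\<^sub>m n" .
    show ?thesis using fmul[OF rL x] fr smult_one_mat_left[OF fcar[OF x]] by simp
  qed
  obtain BK0 where "basis_over K BK0 L" using K_basis_exists[OF L BQ K KL] by blast
  define BK where "BK = (SOME B. basis_over K B L)"
  have BK: "basis_over K BK L" unfolding BK_def by (rule someI) fact
  have nBK: "n = card BK" unfolding nd field_degree_def BK_def ..
  have fBK: "finite BK" and BKL: "BK \<subseteq> L" and indBK: "lin_indep_over K BK" and spBK: "lin_comb_over K BK = L"
    using BK unfolding basis_over_def by auto
  have n0: "0 < n"
  proof (rule ccontr)
    assume "\<not> 0 < n"
    then have "BK = {}" using nBK fBK by simp
    then have "L = {0}" using spBK unfolding lin_comb_over_def by auto
    then show False using sf_1[OF L] by simp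
  qed
  obtain e where e: "bij_betw e {0..<n} BK" using ex_bij_betw_nat_finite[OF fBK] nBK by metis
  have einj: "inj_on e {0..<n}" and eBK: "\<And>i. i < n \<Longrightarrow> e i \<in> BK" using e unfolding bij_betw_def by auto
  define h where "h w = (\<Sum>i\<in>{0..<n}. w i * e i)" for w :: "nat \<Rightarrow> complex"
  have hK: "h w \<in> L" if "\<And>i. i < n \<Longrightarrow> w i \<in> K" for w
    unfolding h_def using that eBK BKL KL by (intro sf_sum[OF L]) (auto intro!: sf_mult[OF L])
  have hinj: "w i = w' i" if w: "\<And>i. i < n \<Longrightarrow> w i \<in> K" and w': "\<And>i. i < n \<Longrightarrow> w' i \<in> K"
     and hw: "h w = h w'" and i: "i < n" for w w' i
  proof -
    define d where "d i = w i - w' i" for i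
    define c where "c b = d (the_inv_into {0..<n} e b)" for b
    have "(\<Sum>i\<in>{0..<n}. d i * e i) = h w - h w'" unfolding h_def d_def
      by (simp add: sum_subtractf algebra_simps)
    then have s0: "(\<Sum>i\<in>{0..<n}. d i * e i) = 0" using hw by simp
    have "(\<Sum>b\<in>BK. c b * b) = (\<Sum>i\<in>{0..<n}. c (e i) * e i)"
      using sum.reindex_bij_betw[OF e, of "\<lambda>b. c b * b"] by simp
    also have "\<dots> = (\<Sum>i\<in>{0..<n}. d i * e i)"
      by (rule sum.cong) (auto simp: c_def the_inv_into_f_f[OF einj])
    finally have "(\<Sum>b\<in>BK. c b * b) = 0" using s0 by simp
    moreover have "\<forall>b\<in>BK. c b \<in> K"
    proof
      fix b assume "b \<in> BK"
      then have "the_inv_into {0..<n} e b \<in> {0..<n}" using e by (metis bij_betw_def the_inv_into_into order_refl)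
      then show "c b \<in> K" unfolding c_def d_def using w w' by (auto intro!: sf_diff[OF K])
    qed
    ultimately have "\<forall>b\<in>BK. c b = 0"
      using indBK[unfolded lin_indep_over_def, rule_format, of c] by blast
    then have "c (e i) = 0" using eBK i by blast
    then show ?thesis using i by (simp add: c_def d_def the_inv_into_f_f[OF einj])
  qed
  have hadd: "h (\<lambda>i. a i + b i) = h a + h b" for a b unfolding h_def by (simp add: sum.distrib distrib_right)
  have hsc: "h (\<lambda>i. r * a i) = r * h a" for r a unfolding h_def by (simp add: sum_distrib_left mult.assoc)
  define p where "p x = h (\<lambda>i. f x $$ (i, 0))" for x
  have fKe: "f x $$ (i, j) \<in> K" if "x \<in> L" "i < n" "j < n" for x i j using fK[OF that(1)] that unfolding mat_over_def by auto
  have pL: "p x \<in> L" if "x \<in> L" for x unfolding p_def using fKe[OF that _ n0] by (intro hK) auto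
  have padd: "p (x + y) = p x + p y" if "x \<in> L" "y \<in> L" for x y
  proof -
    have "p (x + y) = h (\<lambda>i. f x $$ (i, 0) + f y $$ (i, 0))" unfolding p_def h_def
      by (rule sum.cong) (use fadd[OF that] fcar[OF that(1)] fcar[OF that(2)] n0 in auto)
    then show ?thesis unfolding p_def hadd .
  qed
  have psc: "p (r * x) = r * p x" if "r \<in> \<rat>" "x \<in> L" for r x
  proof -
    have "p (r * x) = h (\<lambda>i. r * f x $$ (i, 0))" unfolding p_def h_def
      by (rule sum.cong) (use fQ[OF that] fcar[OF that(2)] n0 in auto)
    then show ?thesis unfolding p_def hsc .
  qed
  have finj: "x = y" if xy: "x \<in> L" "y \<in> L" and ent: "\<And>i. i < n \<Longrightarrow> f x $$ (i, 0) = f y $$ (i, 0)" for x y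
  proof (rule ccontr)
    assume "x \<noteq> y"
    define z where "z = x - y"
    have zL: "z \<in> L" and z0: "z \<noteq> 0" unfolding z_def using xy \<open>x \<noteq> y\<close> sf_diff[OF L] by auto
    have "f x = f y + f z" using fadd[OF xy(2) zL] unfolding z_def by simp
    then have fz0: "f z $$ (k, 0) = 0" if "k < n" for k
      using ent[OF that] that n0 fcar[OF zL] fcar[OF xy(2)] by (simp add: index_add_mat)
    have izL: "inverse z \<in> L" using sf_inverse[OF L zL] .
    have "f (inverse z * z) = f 1" using z0 by simp
    then have "f (inverse z) * f z = 1\<^sub>m n" using fmul[OF izL zL] f1 by simp
    then have "(f (inverse z) * f z) $$ (0, 0) = 1" using n0 by simp
    moreover have "(f (inverse z) * f z) $$ (0, 0) = 0"
      using fcar[OF izL] fcar[OF zL] n0 fz0 by (simp add: scalar_prod_def)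
    ultimately show False by simp
  qed
  have pinj: "inj_on p L"
  proof (rule inj_onI)
    fix x y assume x: "x \<in> L" and y: "y \<in> L" and pxy: "p x = p y"
    have "f x $$ (i, 0) = f y $$ (i, 0)" if i: "i < n" for i
    proof (rule hinj[of "\<lambda>i. f x $$ (i, 0)" "\<lambda>i. f y $$ (i, 0)"])
      show "\<And>i. i < n \<Longrightarrow> f x $$ (i, 0) \<in> K" using fKe[OF x _ n0] .
      show "\<And>i. i < n \<Longrightarrow> f y $$ (i, 0) \<in> K" using fKe[OF y _ n0] .
      show "h (\<lambda>i. f x $$ (i, 0)) = h (\<lambda>i. f y $$ (i, 0))" using pxy unfolding p_def .
      show "i < n" by (rule i)
    qed
    then show "x = y" using finj[OF x y] by blast
  qed
  have surj: "\<exists>l\<in>L. \<forall>i<n. f l $$ (i, 0) = w i" if w: "\<And>i. i < n \<Longrightarrow> w i \<in> K" for w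
  proof -
    have hw: "h w \<in> L" by (rule hK) (rule w)
    obtain l where l: "l \<in> L" "p l = h w" using Q_inj_surj[of L BQ p "h w", OF L BQ pL padd psc pinj hw] by blast
    have "f l $$ (i, 0) = w i" if i: "i < n" for i
    proof (rule hinj[of "\<lambda>i. f l $$ (i, 0)" w])
      show "\<And>i. i < n \<Longrightarrow> f l $$ (i, 0) \<in> K" using fKe[OF l(1) _ n0] .
      show "\<And>i. i < n \<Longrightarrow> w i \<in> K" by (rule w)
      show "h (\<lambda>i. f l $$ (i, 0)) = h w" using l(2) unfolding p_def .
      show "i < n" by (rule i)
    qed
    then show ?thesis using l(1) by blast
  qed
  have key: "\<exists>l\<in>L. f l = k \<cdot>\<^sub>m 1\<^sub>m n" if k: "k \<in> K" for k
  proof -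
    have "\<exists>l\<in>L. \<forall>i<n. f l $$ (i, 0) = (if i = 0 then k else 0)"
      by (rule surj) (use k sf_0[OF K] in auto)
    then obtain l where l: "l \<in> L" "\<And>i. i < n \<Longrightarrow> f l $$ (i, 0) = (if i = 0 then k else 0)"
      by blast
    have ys: "\<exists>y\<in>L. \<forall>i<n. f y $$ (i, 0) = (if i = j then 1 else 0)" for j
      by (rule surj) (use sf_0[OF K] sf_1[OF K] in auto)
    have "f l $$ (i, j) = (k \<cdot>\<^sub>m 1\<^sub>m n) $$ (i, j)" if ij: "i < n" "j < n" for i j
    proof -
      obtain y where y: "y \<in> L" "\<And>i. i < n \<Longrightarrow> f y $$ (i, 0) = (if i = j then 1 else 0)" using ys[of j] by blast
      have "f l $$ (i, j) = (f l * f y) $$ (i, 0)"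
        using mat_col_unit[OF fcar[OF l(1)] fcar[OF y(1)] ij(1) ij(2) n0 y(2)] by simp
      also have "\<dots> = f (y * l) $$ (i, 0)" using fmul[OF l(1) y(1)] by (simp add: mult.commute)
      also have "\<dots> = (f y * f l) $$ (i, 0)" using fmul[OF y(1) l(1)] by simp
      also have "\<dots> = f y $$ (i, 0) * k"
        by (rule mat_col_unit[OF fcar[OF y(1)] fcar[OF l(1)] ij(1) n0 n0 l(2)])
      also have "\<dots> = (k \<cdot>\<^sub>m 1\<^sub>m n) $$ (i, j)" using y(2)[OF ij(1)] ij by simp
      finally show ?thesis .
    qed
    then have "f l = k \<cdot>\<^sub>m 1\<^sub>m n" using fcar[OF l(1)] by (intro eq_matI) auto
    then show ?thesis using l(1) by blast
  qed
  have finj2: "x = y" if "x \<in> L" "y \<in> L" "f x = f y" for x y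
    using finj[OF that(1,2)] that(3) by simp
  define \<phi> where "\<phi> k = (SOME l. l \<in> L \<and> f l = k \<cdot>\<^sub>m 1\<^sub>m n)" for k
  have \<phi>: "\<phi> k \<in> L \<and> f (\<phi> k) = k \<cdot>\<^sub>m 1\<^sub>m n" if "k \<in> K" for k
  proof -
    have "\<exists>l. l \<in> L \<and> f l = k \<cdot>\<^sub>m 1\<^sub>m n" using key[OF that] by blast
    then show ?thesis unfolding \<phi>_def by (rule someI_ex)
  qed
  have frh: "field_ring_hom K L \<phi>"
    unfolding field_ring_hom_def
  proof (intro conjI ballI)
    show "\<phi> ` K \<subseteq> L" using \<phi> by blast
    have "f (\<phi> 1) = f 1" using \<phi>[OF sf_1[OF K]] f1 by (simp add: smult_1_mat)
    then show "\<phi> 1 = 1" using finj2 \<phi>[OF sf_1[OF K]] sf_1[OF L] by blast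
  next
    fix x y assume x: "x \<in> K" and y: "y \<in> K"
    have xy: "x + y \<in> K" "x * y \<in> K" using x y sf_add[OF K] sf_mult[OF K] by auto
    have "f (\<phi> x + \<phi> y) = f (\<phi> (x + y))"
      using fadd \<phi>[OF x] \<phi>[OF y] \<phi>[OF xy(1)] add_smult_distrib_right_mat[OF one_carrier_mat, of x y n] by simp
    then show "\<phi> (x + y) = \<phi> x + \<phi> y"
      using finj2 \<phi>[OF x] \<phi>[OF y] \<phi>[OF xy(1)] sf_add[OF L] by metis
    have "(x \<cdot>\<^sub>m 1\<^sub>m n) * (y \<cdot>\<^sub>m 1\<^sub>m n) = (x * y) \<cdot>\<^sub>m 1\<^sub>m n"
      using smult_one_mat_left[of "y \<cdot>\<^sub>m 1\<^sub>m n" n x] by (simp add: smult_smult_mat')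
    then have "f (\<phi> x * \<phi> y) = f (\<phi> (x * y))"
      using fmul \<phi>[OF x] \<phi>[OF y] \<phi>[OF xy(2)] by simp
    then show "\<phi> (x * y) = \<phi> x * \<phi> y"
      using finj2 \<phi>[OF x] \<phi>[OF y] \<phi>[OF xy(2)] sf_mult[OF L] by metis
  qed
  have fphi: "f (\<phi> k * x) = k \<cdot>\<^sub>m f x" if "k \<in> K" "x \<in> L" for k x
    using fmul[of "\<phi> k" x] \<phi>[OF that(1)] that(2) smult_one_mat_left[OF fcar[OF that(2)]] by simp
  have comp: "compatible K L n \<Gamma> \<phi> \<rho>"
    unfolding compatible_def Let_def f_def[symmetric]
    using fK f1 fadd fmul fphi by blast
  have uniq: "\<forall>x\<in>K. \<psi> x = \<phi> x" if "field_ring_hom K L \<psi> \<and> compatible K L n \<Gamma> \<psi> \<rho>" for \<psi>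
  proof
    fix x assume x: "x \<in> K"
    have \<psi>L: "\<psi> x \<in> L" using that x unfolding field_ring_hom_def by blast
    have "f (\<psi> x * 1) = x \<cdot>\<^sub>m f 1"
      using that x sf_1[OF L] unfolding compatible_def Let_def f_def[symmetric] by blast
    then have "f (\<psi> x) = f (\<phi> x)" using f1 \<phi>[OF x] by simp
    then show "\<psi> x = \<phi> x" using finj2 \<psi>L \<phi>[OF x] by blast
  qed
  show ?thesis using frh comp uniq by blast
qed

lemma conj_mult:
  fixes A B U V :: "complex mat"
  assumes c: "A \<in> carrier_mat n n" "B \<in> carrier_mat n n" "U \<in> carrier_mat n n" "V \<in> carrier_mat n n"
    and VU: "V * U = 1\<^sub>m n"
  shows "(U * A * V) * (U * B * V) = U * (A * B) * V"
proof -
  have AV: "A * V \<in> carrier_mat n n" and BV: "B * V \<in> carrier_mat n n" using c by auto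
  have UBV: "U * (B * V) \<in> carrier_mat n n" using c BV by auto
  have "(U * A * V) * (U * B * V) = (U * (A * V)) * (U * (B * V))"
    using assoc_mult_mat[OF c(3) c(1) c(4)] assoc_mult_mat[OF c(3) c(2) c(4)] by simp
  also have "\<dots> = U * ((A * V) * (U * (B * V)))" by (rule assoc_mult_mat[OF c(3) AV UBV])
  also have "(A * V) * (U * (B * V)) = A * (V * (U * (B * V)))" by (rule assoc_mult_mat[OF c(1) c(4) UBV])
  also have "V * (U * (B * V)) = (V * U) * (B * V)" by (rule assoc_mult_mat[OF c(4) c(3) BV, symmetric])
  also have "\<dots> = B * V" using VU left_mult_one_mat[OF BV] by simp
  also have "A * (B * V) = (A * B) * V" by (rule assoc_mult_mat[OF c(1) c(2) c(4), symmetric])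
  also have "U * ((A * B) * V) = U * (A * B) * V" using c by (intro assoc_mult_mat[symmetric]) auto
  finally show ?thesis .
qed

lemma conj_smult:
  fixes A U V :: "complex mat"
  assumes c: "A \<in> carrier_mat n n" "U \<in> carrier_mat n n" "V \<in> carrier_mat n n"
  shows "U * (k \<cdot>\<^sub>m A) * V = k \<cdot>\<^sub>m (U * A * V)"
  using c by (simp add: mult_smult_distrib mult_smult_assoc_mat[of _ n n _ n])

lemma main2:
  fixes L K \<Gamma> :: "complex set" and n :: nat and \<rho> :: "complex \<Rightarrow> complex mat"
  assumes NF: "number_field L" and ord: "order_of L \<Gamma>" and K: "subfield_c K"
    and rh: "mat_ring_hom \<Gamma> n (ring_of_integers K) \<rho>"
    and comp: "compatible K L n \<Gamma> \<phi> \<rho>" and frh: "field_ring_hom K L \<phi>"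
    and U: "U \<in> mat_over n (ring_of_integers K)" and V: "V \<in> mat_over n (ring_of_integers K)"
    and UV: "U * V = 1\<^sub>m n" and VU: "V * U = 1\<^sub>m n"
  shows "compatible K L n \<Gamma> \<phi> (\<lambda>x. U * \<rho> x * V)"
proof -
  have L: "subfield_c L" using NF unfolding number_field_def by blast
  have rO: "\<And>x. x \<in> \<Gamma> \<Longrightarrow> \<rho> x \<in> mat_over n (ring_of_integers K)"
    and radd: "\<And>x y. x \<in> \<Gamma> \<Longrightarrow> y \<in> \<Gamma> \<Longrightarrow> \<rho> (x + y) = \<rho> x + \<rho> y"
    using rh unfolding mat_ring_hom_def by auto
  have car: "\<And>x. x \<in> \<Gamma> \<Longrightarrow> \<rho> x \<in> carrier_mat n n" using rO unfolding mat_over_def by auto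
  have Uc: "U \<in> carrier_mat n n" and Vc: "V \<in> carrier_mat n n" using U V unfolding mat_over_def by auto
  have UK: "U \<in> mat_over n K" and VK: "V \<in> mat_over n K"
    using U V unfolding mat_over_def ring_of_integers_def by auto
  define \<rho>' where "\<rho>' x = U * \<rho> x * V" for x
  have car': "\<And>x. x \<in> \<Gamma> \<Longrightarrow> \<rho>' x \<in> carrier_mat n n" unfolding \<rho>'_def using car Uc Vc by auto
  have radd': "\<rho>' (x + y) = \<rho>' x + \<rho>' y" if "x \<in> \<Gamma>" "y \<in> \<Gamma>" for x y
  proof -
    have "U * (\<rho> x + \<rho> y) = U * \<rho> x + U * \<rho> y"
      by (rule mult_add_distrib_mat[OF Uc car[OF that(1)] car[OF that(2)]])
    moreover have "(U * \<rho> x + U * \<rho> y) * V = U * \<rho> x * V + U * \<rho> y * V"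
      by (rule add_mult_distrib_mat) (use Uc car[OF that(1)] car[OF that(2)] Vc in auto)
    ultimately show ?thesis unfolding \<rho>'_def radd[OF that] by simp
  qed
  define f where "f = tensor_Q \<Gamma> \<rho>"
  have fcar: "\<And>x. x \<in> L \<Longrightarrow> f x \<in> carrier_mat n n" unfolding f_def by (rule tQ_car[OF ord car radd])
  have f'eq: "tensor_Q \<Gamma> \<rho>' x = U * f x * V" if x: "x \<in> L" for x
  proof -
    obtain m where m: "m > 0" "of_int m * x \<in> \<Gamma>" using denom[OF ord car radd x] by blast
    have "tensor_Q \<Gamma> \<rho>' x = (1 / of_int m) \<cdot>\<^sub>m \<rho>' (of_int m * x)" by (rule tensor_eq[OF ord car' radd' m])
    also have "\<dots> = U * ((1 / of_int m) \<cdot>\<^sub>m \<rho> (of_int m * x)) * V"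
      unfolding \<rho>'_def using conj_smult[OF car[OF m(2)] Uc Vc] by simp
    also have "\<dots> = U * f x * V" using tensor_eq[OF ord car radd m] unfolding f_def by simp
    finally show ?thesis .
  qed
  have fK: "\<And>x. x \<in> L \<Longrightarrow> f x \<in> mat_over n K" and f1: "f 1 = 1\<^sub>m n"
    and fadd: "\<And>x y. x \<in> L \<Longrightarrow> y \<in> L \<Longrightarrow> f (x + y) = f x + f y"
    and fmul: "\<And>x y. x \<in> L \<Longrightarrow> y \<in> L \<Longrightarrow> f (x * y) = f x * f y"
    and fphi: "\<And>k x. k \<in> K \<Longrightarrow> x \<in> L \<Longrightarrow> f (\<phi> k * x) = k \<cdot>\<^sub>m f x"
    using comp unfolding compatible_def Let_def f_def by auto
  have phiL: "\<phi> k * x \<in> L" if "k \<in> K" "x \<in> L" for k x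
    using frh that sf_mult[OF L] unfolding field_ring_hom_def by blast
  show ?thesis
    unfolding compatible_def Let_def \<rho>'_def[symmetric]
  proof (intro conjI ballI)
    fix x assume x: "x \<in> L"
    show "tensor_Q \<Gamma> \<rho>' x \<in> mat_over n K"
      unfolding f'eq[OF x] by (intro mat_over_mult[OF K] UK VK fK x)
  next
    show "tensor_Q \<Gamma> \<rho>' 1 = 1\<^sub>m n" using f'eq[OF sf_1[OF L]] f1 Uc Vc UV by simp
  next
    fix x y assume x: "x \<in> L" and y: "y \<in> L"
    have xy: "x + y \<in> L" "x * y \<in> L" using sf_add[OF L x y] sf_mult[OF L x y] by auto
    have "U * (f x + f y) * V = U * f x * V + U * f y * V"
      using fcar[OF x] fcar[OF y] Uc Vc by (simp add: mult_add_distrib_mat add_mult_distrib_mat[of _ n n])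
    then show "tensor_Q \<Gamma> \<rho>' (x + y) = tensor_Q \<Gamma> \<rho>' x + tensor_Q \<Gamma> \<rho>' y"
      unfolding f'eq[OF x] f'eq[OF y] f'eq[OF xy(1)] fadd[OF x y] .
    show "tensor_Q \<Gamma> \<rho>' (x * y) = tensor_Q \<Gamma> \<rho>' x * tensor_Q \<Gamma> \<rho>' y"
      unfolding f'eq[OF x] f'eq[OF y] f'eq[OF xy(2)] fmul[OF x y]
      using conj_mult[OF fcar[OF x] fcar[OF y] Uc Vc VU] by simp
  next
    fix k x assume k: "k \<in> K" and x: "x \<in> L"
    show "tensor_Q \<Gamma> \<rho>' (\<phi> k * x) = k \<cdot>\<^sub>m tensor_Q \<Gamma> \<rho>' x"
      unfolding f'eq[OF x] f'eq[OF phiL[OF k x]] fphi[OF k x] by (rule conj_smult[OF fcar[OF x] Uc Vc])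
  qed
qed


theorem lemma10p4:
  fixes L K \<Gamma> :: "complex set" and n :: nat and \<rho> :: "complex \<Rightarrow> complex mat"
  assumes "number_field L"
    and "order_of L \<Gamma>"
    and "subfield_c K" and "K \<subseteq> L"
    and "n = field_degree K L"
    and "mat_ring_hom \<Gamma> n (ring_of_integers K) \<rho>"
  shows "(\<exists>\<phi>. field_ring_hom K L \<phi> \<and> compatible K L n \<Gamma> \<phi> \<rho>
           \<and> (\<forall>\<psi>. field_ring_hom K L \<psi> \<and> compatible K L n \<Gamma> \<psi> \<rho> \<longrightarrow> (\<forall>x\<in>K. \<psi> x = \<phi> x)))
       \<and> (\<forall>\<phi> U V. field_ring_hom K L \<phi> \<and> compatible K L n \<Gamma> \<phi> \<rho>
            \<and> U \<in> mat_over n (ring_of_integers K) \<and> V \<in> mat_over n (ring_of_integers K)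
            \<and> U * V = 1\<^sub>m n \<and> V * U = 1\<^sub>m n
            \<longrightarrow> compatible K L n \<Gamma> \<phi> (\<lambda>x. U * \<rho> x * V))"
proof (intro conjI allI impI)
  show "\<exists>\<phi>. field_ring_hom K L \<phi> \<and> compatible K L n \<Gamma> \<phi> \<rho>
           \<and> (\<forall>\<psi>. field_ring_hom K L \<psi> \<and> compatible K L n \<Gamma> \<psi> \<rho> \<longrightarrow> (\<forall>x\<in>K. \<psi> x = \<phi> x))"
    by (rule main1[OF assms])
next
  fix \<phi> U V
  assume h: "field_ring_hom K L \<phi> \<and> compatible K L n \<Gamma> \<phi> \<rho>
            \<and> U \<in> mat_over n (ring_of_integers K) \<and> V \<in> mat_over n (ring_of_integers K)
            \<and> U * V = 1\<^sub>m n \<and> V * U = 1\<^sub>m n"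
  then show "compatible K L n \<Gamma> \<phi> (\<lambda>x. U * \<rho> x * V)"
    using main2[OF assms(1) assms(2) assms(3) assms(6)] by blast
qed

end
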